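(* Let $(R,\mathfrak{m})$ be a Noetherian local ring and let $J\subseteq I$ be two ideals of $R$. Let $x_1,\ldots,x_s$ be a minimal generating set of $J$. Write $J_0=0$ and $J_i=(x_1,\ldots,x_i)$ for $i=1,\ldots,s$. Let $n\geq 2$. Then the following are equivalent: (i) $H_1(x_1t,\ldots,x_it;\mathbf{R}(I))_n=0$ for all $i=1,\ldots,s$; (ii) $\big((J_{i-1}I^{n-1}:x_i)\cap I^{n-1}\big)/J_{i-1}I^{n-2}=0$ for all $i=1,\ldots,s$. Suppose in addition that $x_1,\ldots,x_s$ is an $R$-sequence and that $x_1^*,\ldots,x_{s-1}^*$ is a $\mathbf{G}(I)$-sequence. Then $H_1(x_1t,\ldots,x_it;\mathbf{R}(I))_n=0$ for all $n\geq 2$ and all $i=1,\ldots,s$.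
   Context: $\mathbf{R}(I)=\bigoplus_{n\geq0}I^nt^n$ is the Rees algebra, $\mathbf{G}(I)=\bigoplus_{n\geq0}I^n/I^{n+1}$ the associated graded ring, and $x_i^*$ the class of $x_i$ in $I/I^2$; $I^0=R$. For degree-one elements $z_1,\ldots,z_m$ of $U=\mathbf{R}(I)$, $H_1(z_1,\ldots,z_m;U)_n$ is the first homology of the degree-$n$ strand of the Koszul complex $\wedge_2(R^m)\otimes U_{n-2}\to\wedge_1(R^m)\otimes U_{n-1}\to U_n$, with differentials $e_i\wedge e_j\otimes u\mapsto e_j\otimes z_iu-e_i\otimes z_ju$ and $e_i\otimes v\mapsto z_iv$. *)

theory Defs
  imports Main
begin

definition is_ideal :: "'a::comm_ring_1 set \<Rightarrow> bool" where
  "is_ideal K \<longleftrightarrow> 0 \<in> K \<and> (\<forall>a\<in>K. \<forall>b\<in>K. a + b \<in> K) \<and> (\<forall>r. \<forall>a\<in>K. r * a \<in> K)"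

definition ideal_gen :: "'a::comm_ring_1 set \<Rightarrow> 'a set" where
  "ideal_gen S = \<Inter>{K. is_ideal K \<and> S \<subseteq> K}"

definition ideal_mult :: "'a::comm_ring_1 set \<Rightarrow> 'a set \<Rightarrow> 'a set" where
  "ideal_mult A B = ideal_gen {a * b | a b. a \<in> A \<and> b \<in> B}"

primrec ideal_pow :: "'a::comm_ring_1 set \<Rightarrow> nat \<Rightarrow> 'a set" where
  "ideal_pow I 0 = UNIV"
| "ideal_pow I (Suc n) = ideal_mult I (ideal_pow I n)"

definition colon_ideal :: "'a::comm_ring_1 set \<Rightarrow> 'a \<Rightarrow> 'a set" where
  "colon_ideal K x = {r. r * x \<in> K}"

definition maximal_ideal :: "'a::comm_ring_1 set \<Rightarrow> bool" where
  "maximal_ideal M \<longleftrightarrow> is_ideal M \<and> M \<noteq> UNIV \<and>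
     (\<forall>K. is_ideal K \<and> M \<subseteq> K \<longrightarrow> K = M \<or> K = UNIV)"

definition local_ring :: "'a::comm_ring_1 itself \<Rightarrow> bool" where
  "local_ring _ \<longleftrightarrow> (\<exists>!M::'a set. maximal_ideal M)"

definition noetherian_ring :: "'a::comm_ring_1 itself \<Rightarrow> bool" where
  "noetherian_ring _ \<longleftrightarrow> (\<forall>K::'a set. is_ideal K \<longrightarrow> (\<exists>S. finite S \<and> K = ideal_gen S))"

definition minimal_gens :: "(nat \<Rightarrow> 'a::comm_ring_1) \<Rightarrow> nat \<Rightarrow> 'a set \<Rightarrow> bool" where
  "minimal_gens x s J \<longleftrightarrow> J = ideal_gen (x ` {1..s}) \<and>
     (\<forall>S. finite S \<and> J = ideal_gen S \<longrightarrow> s \<le> card S)"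

definition regular_seq :: "(nat \<Rightarrow> 'a::comm_ring_1) \<Rightarrow> nat \<Rightarrow> bool" where
  "regular_seq x s \<longleftrightarrow>
     (\<forall>i\<in>{1..s}. \<forall>r. r * x i \<in> ideal_gen (x ` {1..<i}) \<longrightarrow> r \<in> ideal_gen (x ` {1..<i})) \<and>
     (s > 0 \<longrightarrow> ideal_gen (x ` {1..s}) \<noteq> UNIV)"

text \<open>Vanishing of H_1(x_1 t, ..., x_i t; R(I))_n, n \<ge> 2. The degree-n strand of the Koszul
  complex is  \<wedge>_2(R^i) \<otimes> I^(n-2) t^(n-2) \<rightarrow> R^i \<otimes> I^(n-1) t^(n-1) \<rightarrow> I^n t^n; we identify
  a t^k with a. A 1-cycle is v = (v_1..v_i), v_l \<in> I^(n-1), with sum x_l v_l = 0; a boundary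
  is the image of sum_{j<k} e_j\<wedge>e_k \<otimes> u_jk (u_jk \<in> I^(n-2)), whose l-th component is
  sum_{j<l} x_j u_jl - sum_{k>l} x_k u_lk.\<close>
definition koszul_H1_zero ::
  "'a::comm_ring_1 set \<Rightarrow> (nat \<Rightarrow> 'a) \<Rightarrow> nat \<Rightarrow> nat \<Rightarrow> bool" where
  "koszul_H1_zero I x i n \<longleftrightarrow>
     (\<forall>v. (\<forall>l\<in>{1..i}. v l \<in> ideal_pow I (n - 1)) \<and> (\<Sum>l\<in>{1..i}. x l * v l) = 0 \<longrightarrow>
        (\<exists>u. (\<forall>j\<in>{1..i}. \<forall>k\<in>{1..i}. j < k \<longrightarrow> u j k \<in> ideal_pow I (n - 2)) \<and>
             (\<forall>l\<in>{1..i}. v l = (\<Sum>j\<in>{1..<l}. x j * u j l) - (\<Sum>k\<in>{l<..i}. x k * u l k))))"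

text \<open>The associated graded ring G(I) = \<oplus> I^n/I^(n+1), via representatives:
  a representative is f with f n \<in> I^n and finite support; two representatives
  are equal in G(I) iff f n - g n \<in> I^(n+1) for all n.\<close>
definition gr_rep :: "'a::comm_ring_1 set \<Rightarrow> (nat \<Rightarrow> 'a) \<Rightarrow> bool" where
  "gr_rep I f \<longleftrightarrow> (\<forall>n. f n \<in> ideal_pow I n) \<and> finite {n. f n \<noteq> 0}"

definition gr_eq :: "'a::comm_ring_1 set \<Rightarrow> (nat \<Rightarrow> 'a) \<Rightarrow> (nat \<Rightarrow> 'a) \<Rightarrow> bool" where
  "gr_eq I f g \<longleftrightarrow> (\<forall>n. f n - g n \<in> ideal_pow I (Suc n))"

definition gr_mul :: "(nat \<Rightarrow> 'a::comm_ring_1) \<Rightarrow> (nat \<Rightarrow> 'a) \<Rightarrow> nat \<Rightarrow> 'a" where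
  "gr_mul f g = (\<lambda>n. \<Sum>k\<le>n. f k * g (n - k))"

text \<open>x^*: the class of x in I/I^2 (homogeneous of degree one).\<close>
definition gr_star :: "'a::comm_ring_1 \<Rightarrow> nat \<Rightarrow> 'a" where
  "gr_star a = (\<lambda>n. if n = 1 then a else 0)"

definition gr_one :: "nat \<Rightarrow> 'a::comm_ring_1" where
  "gr_one = (\<lambda>n. if n = 0 then 1 else 0)"

definition gr_ideal :: "'a::comm_ring_1 set \<Rightarrow> (nat \<Rightarrow> 'a) \<Rightarrow> nat \<Rightarrow> (nat \<Rightarrow> 'a) set" where
  "gr_ideal I y k = {h. gr_rep I h \<and>
     (\<exists>g. (\<forall>j\<in>{1..k}. gr_rep I (g j)) \<and>
          gr_eq I h (\<lambda>n. \<Sum>j\<in>{1..k}. gr_mul (gr_star (y j)) (g j) n))}"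

definition gr_regular_seq :: "'a::comm_ring_1 set \<Rightarrow> (nat \<Rightarrow> 'a) \<Rightarrow> nat \<Rightarrow> bool" where
  "gr_regular_seq I y k \<longleftrightarrow>
     (\<forall>i\<in>{1..k}. \<forall>g. gr_rep I g \<and> gr_mul (gr_star (y i)) g \<in> gr_ideal I y (i - 1)
         \<longrightarrow> g \<in> gr_ideal I y (i - 1)) \<and>
     (k > 0 \<longrightarrow> gr_one \<notin> gr_ideal I y k)"

end

theory Submission
  imports Defs
begin


definition lc :: "(nat \<Rightarrow> 'a::comm_ring_1) \<Rightarrow> nat set \<Rightarrow> 'a set \<Rightarrow> 'a set" where
  "lc y A K = {t. \<exists>c. (\<forall>j\<in>A. c j \<in> K) \<and> t = (\<Sum>j\<in>A. y j * c j)}"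

lemma ideal_gen_ideal: "is_ideal (ideal_gen S)"
  unfolding ideal_gen_def is_ideal_def by auto

lemma ideal_gen_sub: "S \<subseteq> ideal_gen S"
  unfolding ideal_gen_def by auto

lemma ideal_gen_least: "is_ideal K \<Longrightarrow> S \<subseteq> K \<Longrightarrow> ideal_gen S \<subseteq> K"
  unfolding ideal_gen_def by auto

lemma ideal_gen_mono: "S \<subseteq> T \<Longrightarrow> ideal_gen S \<subseteq> ideal_gen T"
  unfolding ideal_gen_def by auto

lemma ideal_zero: "is_ideal K \<Longrightarrow> 0 \<in> K"
  unfolding is_ideal_def by auto
lemma ideal_add: "is_ideal K \<Longrightarrow> a \<in> K \<Longrightarrow> b \<in> K \<Longrightarrow> a + b \<in> K"
  unfolding is_ideal_def by auto
lemma ideal_lmult: "is_ideal K \<Longrightarrow> a \<in> K \<Longrightarrow> r * a \<in> K"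
  unfolding is_ideal_def by auto
lemma ideal_rmult: "is_ideal K \<Longrightarrow> a \<in> K \<Longrightarrow> a * r \<in> K"
  unfolding is_ideal_def by (metis mult.commute)
lemma ideal_neg: "is_ideal K \<Longrightarrow> a \<in> K \<Longrightarrow> - a \<in> K"
  using ideal_lmult[of K a "-1"] by simp
lemma ideal_diff: "is_ideal K \<Longrightarrow> a \<in> K \<Longrightarrow> b \<in> K \<Longrightarrow> a - b \<in> K"
  using ideal_add[of K a "-b"] ideal_neg[of K b] by simp

lemma ideal_sum: "is_ideal K \<Longrightarrow> (\<forall>j\<in>A. f j \<in> K) \<Longrightarrow> sum f A \<in> K"
proof (induction A rule: infinite_finite_induct)
  case (infinite A) then show ?case by (simp add: ideal_zero)
next
  case empty then show ?case by (simp add: ideal_zero)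
next
  case (insert a F) then show ?case by (simp add: ideal_add)
qed

lemma lc_ideal: "is_ideal K \<Longrightarrow> is_ideal (lc y A K)"
  unfolding is_ideal_def lc_def
proof (intro conjI ballI allI)
  assume K: "0 \<in> K \<and> (\<forall>a\<in>K. \<forall>b\<in>K. a + b \<in> K) \<and> (\<forall>r. \<forall>a\<in>K. r * a \<in> K)"
  show "0 \<in> {t. \<exists>c. (\<forall>j\<in>A. c j \<in> K) \<and> t = (\<Sum>j\<in>A. y j * c j)}"
    using K by (auto intro!: exI[of _ "\<lambda>_. 0"])
  fix a b assume a: "a \<in> {t. \<exists>c. (\<forall>j\<in>A. c j \<in> K) \<and> t = (\<Sum>j\<in>A. y j * c j)}"
    and b: "b \<in> {t. \<exists>c. (\<forall>j\<in>A. c j \<in> K) \<and> t = (\<Sum>j\<in>A. y j * c j)}"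
  then obtain c d where "\<forall>j\<in>A. c j \<in> K" "a = (\<Sum>j\<in>A. y j * c j)"
    "\<forall>j\<in>A. d j \<in> K" "b = (\<Sum>j\<in>A. y j * d j)" by auto
  then show "a + b \<in> {t. \<exists>c. (\<forall>j\<in>A. c j \<in> K) \<and> t = (\<Sum>j\<in>A. y j * c j)}"
    using K by (auto intro!: exI[of _ "\<lambda>j. c j + d j"] simp: sum.distrib distrib_left)
next
  fix r a
  assume K: "0 \<in> K \<and> (\<forall>a\<in>K. \<forall>b\<in>K. a + b \<in> K) \<and> (\<forall>r. \<forall>a\<in>K. r * a \<in> K)"
   and a: "a \<in> {t. \<exists>c. (\<forall>j\<in>A. c j \<in> K) \<and> t = (\<Sum>j\<in>A. y j * c j)}"
  then obtain c where "\<forall>j\<in>A. c j \<in> K" "a = (\<Sum>j\<in>A. y j * c j)" by auto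
  then show "r * a \<in> {t. \<exists>c. (\<forall>j\<in>A. c j \<in> K) \<and> t = (\<Sum>j\<in>A. y j * c j)}"
    using K by (auto intro!: exI[of _ "\<lambda>j. r * c j"] simp: sum_distrib_left mult.left_commute)
qed

lemma lc_mono: "K \<subseteq> L \<Longrightarrow> lc y A K \<subseteq> lc y A L"
  unfolding lc_def by blast

lemma lc_memI: "(\<forall>j\<in>A. c j \<in> K) \<Longrightarrow> (\<Sum>j\<in>A. y j * c j) \<in> lc y A K"
  unfolding lc_def by blast

lemma lc_memE: "t \<in> lc y A K \<Longrightarrow> (\<And>c. \<forall>j\<in>A. c j \<in> K \<Longrightarrow> t = (\<Sum>j\<in>A. y j * c j) \<Longrightarrow> P) \<Longrightarrow> P"
  unfolding lc_def by blast

lemma lc_empty: "lc y {} K = {0}"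
  unfolding lc_def by auto

lemma ideal_gen_lc: "finite A \<Longrightarrow> ideal_gen (y ` A) = lc y A UNIV"
proof
  assume fin: "finite A"
  show "ideal_gen (y ` A) \<subseteq> lc y A UNIV"
  proof (rule ideal_gen_least)
    show "is_ideal (lc y A UNIV)" by (rule lc_ideal) (simp add: is_ideal_def)
    show "y ` A \<subseteq> lc y A UNIV"
    proof
      fix t assume "t \<in> y ` A"
      then obtain i where i: "i \<in> A" "t = y i" by auto
      have "(\<Sum>j\<in>A. y j * (if j = i then 1 else 0)) = y i"
        using fin i by (simp add: if_distrib sum.delta cong: if_cong)
      then show "t \<in> lc y A UNIV" using lc_memI[of A "\<lambda>j. if j = i then 1 else 0" UNIV y] i by simp
    qed
  qed
  show "lc y A UNIV \<subseteq> ideal_gen (y ` A)"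
  proof
    fix t assume "t \<in> lc y A UNIV"
    then obtain c where "t = (\<Sum>j\<in>A. y j * c j)" by (auto elim: lc_memE)
    moreover have "\<forall>j\<in>A. y j * c j \<in> ideal_gen (y ` A)"
    proof
      fix j assume "j \<in> A"
      then have "y j \<in> ideal_gen (y ` A)" using ideal_gen_sub[of "y ` A"] by blast
      then show "y j * c j \<in> ideal_gen (y ` A)" by (rule ideal_rmult[OF ideal_gen_ideal])
    qed
    then have "(\<Sum>j\<in>A. y j * c j) \<in> ideal_gen (y ` A)" by (rule ideal_sum[OF ideal_gen_ideal])
    ultimately show "t \<in> ideal_gen (y ` A)" by simp
  qed
qed

lemma ideal_mult_lc:
  assumes fin: "finite A" and K: "is_ideal K"
  shows "ideal_mult (ideal_gen (y ` A)) K = lc y A K"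
proof
  show "ideal_mult (ideal_gen (y ` A)) K \<subseteq> lc y A K"
    unfolding ideal_mult_def
  proof (rule ideal_gen_least[OF lc_ideal[OF K]], clarify)
    fix a b assume a: "a \<in> ideal_gen (y ` A)" and b: "b \<in> K"
    have "a \<in> lc y A UNIV" using a ideal_gen_lc[OF fin] by auto
    then obtain c where "a = (\<Sum>j\<in>A. y j * c j)" by (auto elim: lc_memE)
    then have "a * b = (\<Sum>j\<in>A. y j * (c j * b))" by (simp add: sum_distrib_right mult.assoc)
    moreover have "\<forall>j\<in>A. c j * b \<in> K" using b K by (simp add: ideal_lmult)
    ultimately show "a * b \<in> lc y A K" using lc_memI by metis
  qed
  show "lc y A K \<subseteq> ideal_mult (ideal_gen (y ` A)) K"
  proof
    fix t assume "t \<in> lc y A K"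
    then obtain c where c: "\<forall>j\<in>A. c j \<in> K" "t = (\<Sum>j\<in>A. y j * c j)" by (auto elim: lc_memE)
    have "\<forall>j\<in>A. y j * c j \<in> ideal_mult (ideal_gen (y ` A)) K"
    proof
      fix j assume j: "j \<in> A"
      have "y j \<in> ideal_gen (y ` A)" using j ideal_gen_sub[of "y ` A"] by blast
      then have "y j * c j \<in> {a * b |a b. a \<in> ideal_gen (y ` A) \<and> b \<in> K}" using c(1) j by blast
      then show "y j * c j \<in> ideal_mult (ideal_gen (y ` A)) K"
        unfolding ideal_mult_def by (rule subsetD[OF ideal_gen_sub])
    qed
    then have "(\<Sum>j\<in>A. y j * c j) \<in> ideal_mult (ideal_gen (y ` A)) K"
      unfolding ideal_mult_def by (rule ideal_sum[OF ideal_gen_ideal])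
    then show "t \<in> ideal_mult (ideal_gen (y ` A)) K" using c(2) by simp
  qed
qed

lemma pow_ideal: "is_ideal (ideal_pow I p)"
  by (cases p) (simp_all add: ideal_mult_def ideal_gen_ideal, simp add: is_ideal_def)

lemma pow_mult: "a \<in> I \<Longrightarrow> b \<in> ideal_pow I p \<Longrightarrow> a * b \<in> ideal_pow I (Suc p)"
  using ideal_gen_sub[of "{a * b |a b. a \<in> I \<and> b \<in> ideal_pow I p}"] by (auto simp: ideal_mult_def)

lemma pow_Suc_sub: "ideal_pow I (Suc p) \<subseteq> ideal_pow I p"
proof (induction p)
  case 0 then show ?case by simp
next
  case (Suc p)
  then show ?case unfolding ideal_pow.simps(2)[of I "Suc p"] ideal_pow.simps(2)[of I p] ideal_mult_def
    by (intro ideal_gen_mono) blast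
qed

lemma pow_anti: "p \<le> q \<Longrightarrow> ideal_pow I q \<subseteq> ideal_pow I p"
proof (induction q)
  case 0 then show ?case by simp
next
  case (Suc q) then show ?case using pow_Suc_sub[of I q] by (cases "p = Suc q") auto
qed



lemma K1:
  assumes H: "koszul_H1_zero I x i n" and i: "1 \<le> i"
    and r: "r \<in> ideal_pow I (n - 1)" and rx: "r * x i \<in> lc x {1..<i} (ideal_pow I (n - 1))"
  shows "r \<in> lc x {1..<i} (ideal_pow I (n - 2))"
proof -
  obtain a where a: "\<forall>j\<in>{1..<i}. a j \<in> ideal_pow I (n - 1)" "r * x i = (\<Sum>j\<in>{1..<i}. x j * a j)"
    using rx by (auto elim: lc_memE)
  define v where "v = (\<lambda>l. if l = i then r else - a l)"
  have setI: "{1..i} = insert i {1..<i}" using i by auto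
  have v1: "\<forall>l\<in>{1..i}. v l \<in> ideal_pow I (n - 1)"
    using a(1) r unfolding v_def by (auto intro!: ideal_neg[OF pow_ideal])
  have "(\<Sum>l\<in>{1..i}. x l * v l) = x i * r + (\<Sum>l\<in>{1..<i}. x l * v l)"
    unfolding setI by (simp add: v_def)
  also have "(\<Sum>l\<in>{1..<i}. x l * v l) = - (\<Sum>l\<in>{1..<i}. x l * a l)"
    unfolding v_def by (simp add: sum_negf[symmetric])
  finally have v2: "(\<Sum>l\<in>{1..i}. x l * v l) = 0" using a(2) by (simp add: mult.commute)
  obtain u where u: "\<forall>j\<in>{1..i}. \<forall>k\<in>{1..i}. j < k \<longrightarrow> u j k \<in> ideal_pow I (n - 2)"
    "\<forall>l\<in>{1..i}. v l = (\<Sum>j\<in>{1..<l}. x j * u j l) - (\<Sum>k\<in>{l<..i}. x k * u l k)"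
    using H v1 v2 unfolding koszul_H1_zero_def by blast
  have "v i = (\<Sum>j\<in>{1..<i}. x j * u j i) - (\<Sum>k\<in>{i<..i}. x k * u i k)" using u(2) i by auto
  then have "r = (\<Sum>j\<in>{1..<i}. x j * u j i)" by (simp add: v_def)
  moreover have "\<forall>j\<in>{1..<i}. u j i \<in> ideal_pow I (n - 2)" using u(1) i by auto
  ultimately show ?thesis using lc_memI by metis
qed

lemma K2:
  assumes xI: "\<forall>l\<in>{1..i}. x l \<in> I" and n: "n \<ge> 2"
    and col: "\<forall>i'\<in>{1..i}. \<forall>r. r \<in> ideal_pow I (n - 1) \<and> r * x i' \<in> lc x {1..<i'} (ideal_pow I (n - 1))
         \<longrightarrow> r \<in> lc x {1..<i'} (ideal_pow I (n - 2))"
  shows "koszul_H1_zero I x i n"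
  using xI col
proof (induction i)
  case 0 then show ?case unfolding koszul_H1_zero_def by simp
next
  case (Suc i)
  let ?i = "Suc i"
  have IH: "koszul_H1_zero I x i n" using Suc by auto
  have nn: "Suc (n - 2) = n - 1" using n by simp
  show ?case unfolding koszul_H1_zero_def
  proof (intro allI impI)
    fix v assume "(\<forall>l\<in>{1..?i}. v l \<in> ideal_pow I (n - 1)) \<and> (\<Sum>l\<in>{1..?i}. x l * v l) = 0"
    then have v1: "\<forall>l\<in>{1..?i}. v l \<in> ideal_pow I (n - 1)" and v2: "(\<Sum>l\<in>{1..?i}. x l * v l) = 0"
      by auto
    have setI: "{1..?i} = insert ?i {1..i}" by auto
    have s0: "x ?i * v ?i + (\<Sum>l\<in>{1..i}. x l * v l) = 0" using v2 unfolding setI by simp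
    have "v ?i * x ?i = (\<Sum>l\<in>{1..<?i}. x l * (- v l))"
      using s0 by (simp add: sum_negf mult.commute eq_neg_iff_add_eq_0 atLeastLessThanSuc_atLeastAtMost add.commute)
    moreover have "\<forall>l\<in>{1..<?i}. - v l \<in> ideal_pow I (n - 1)" using v1 by (auto intro!: ideal_neg[OF pow_ideal])
    ultimately have "v ?i * x ?i \<in> lc x {1..<?i} (ideal_pow I (n - 1))" using lc_memI by metis
    then have "v ?i \<in> lc x {1..<?i} (ideal_pow I (n - 2))" using Suc.prems(2) v1 by auto
    then obtain w where w: "\<forall>l\<in>{1..i}. w l \<in> ideal_pow I (n - 2)" "v ?i = (\<Sum>l\<in>{1..i}. x l * w l)"
      by (auto elim: lc_memE simp: atLeastLessThanSuc_atLeastAtMost)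
    define v' where "v' = (\<lambda>l. v l + x ?i * w l)"
    have xi: "x ?i \<in> I" using Suc.prems by auto
    have v'1: "\<forall>l\<in>{1..i}. v' l \<in> ideal_pow I (n - 1)"
      unfolding v'_def using v1 w(1) pow_mult[OF xi, of _ "n - 2"] nn by (auto intro!: ideal_add[OF pow_ideal])
    have "(\<Sum>l\<in>{1..i}. x l * v' l) = (\<Sum>l\<in>{1..i}. x l * v l) + x ?i * (\<Sum>l\<in>{1..i}. x l * w l)"
      unfolding v'_def by (simp add: distrib_left sum.distrib sum_distrib_left mult.left_commute)
    then have v'2: "(\<Sum>l\<in>{1..i}. x l * v' l) = 0" using s0 w(2) by (simp add: add.commute)
    obtain u' where u': "\<forall>j\<in>{1..i}. \<forall>k\<in>{1..i}. j < k \<longrightarrow> u' j k \<in> ideal_pow I (n - 2)"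
      "\<forall>l\<in>{1..i}. v' l = (\<Sum>j\<in>{1..<l}. x j * u' j l) - (\<Sum>k\<in>{l<..i}. x k * u' l k)"
      using IH v'1 v'2 unfolding koszul_H1_zero_def by blast
    define u where "u = (\<lambda>j k. if k = ?i then w j else u' j k)"
    show "\<exists>u. (\<forall>j\<in>{1..?i}. \<forall>k\<in>{1..?i}. j < k \<longrightarrow> u j k \<in> ideal_pow I (n - 2)) \<and>
             (\<forall>l\<in>{1..?i}. v l = (\<Sum>j\<in>{1..<l}. x j * u j l) - (\<Sum>k\<in>{l<..?i}. x k * u l k))"
    proof (intro exI[of _ u] conjI ballI impI)
      fix j k assume "j \<in> {1..?i}" "k \<in> {1..?i}" "j < k"
      then show "u j k \<in> ideal_pow I (n - 2)" using u'(1) w(1) unfolding u_def by auto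
    next
      fix l assume l: "l \<in> {1..?i}"
      show "v l = (\<Sum>j\<in>{1..<l}. x j * u j l) - (\<Sum>k\<in>{l<..?i}. x k * u l k)"
      proof (cases "l = ?i")
        case True
        then show ?thesis using w(2) by (simp add: u_def atLeastLessThanSuc_atLeastAtMost)
      next
        case False
        then have l': "l \<in> {1..i}" using l by auto
        have e1: "(\<Sum>j\<in>{1..<l}. x j * u j l) = (\<Sum>j\<in>{1..<l}. x j * u' j l)"
          using False by (simp add: u_def)
        have setk: "{l<..?i} = insert ?i {l<..i}" using l' by auto
        have e2: "(\<Sum>k\<in>{l<..?i}. x k * u l k) = x ?i * w l + (\<Sum>k\<in>{l<..i}. x k * u' l k)"
          unfolding setk by (simp add: u_def)
        show ?thesis using u'(2) l' unfolding e1 e2 v'_def by (simp add: algebra_simps)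
      qed
    qed
  qed
qed



lemma gr_mul_star: "gr_mul (gr_star a) g n = (if n = 0 then 0 else a * g (n - 1))"
proof -
  have "gr_mul (gr_star a) g n = (\<Sum>k\<le>n. if k = 1 then a * g (n - 1) else 0)"
    unfolding gr_mul_def gr_star_def by (intro sum.cong) auto
  then show ?thesis by (simp add: sum.delta)
qed

definition single :: "nat \<Rightarrow> 'a::comm_ring_1 \<Rightarrow> nat \<Rightarrow> 'a" where
  "single p b = (\<lambda>n. if n = p then b else 0)"

lemma single_rep: "b \<in> ideal_pow I p \<Longrightarrow> gr_rep I (single p b)"
  unfolding gr_rep_def single_def
  by (auto intro: ideal_zero[OF pow_ideal] finite_subset[of _ "{p}"])

lemma gr_mul_single: "gr_mul (gr_star a) (single p b) n = (if n = Suc p then a * b else 0)"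
  unfolding gr_mul_star single_def by auto

lemma GR:
  assumes G: "gr_regular_seq I y K" and k: "k \<in> {1..K}" and yk: "y k \<in> I"
    and b: "b \<in> ideal_pow I p" and c': "c' \<in> lc y {1..<k} (ideal_pow I p)"
    and e: "e \<in> ideal_pow I (Suc (Suc p))" and eq: "y k * b = c' + e"
  shows "\<exists>d \<in> lc y {1..<k} (ideal_pow I (p - 1)). b - d \<in> ideal_pow I (Suc p)"
proof -
  have km: "{1..k - 1} = {1..<k}" using k by auto
  obtain cc where cc: "\<forall>j\<in>{1..<k}. cc j \<in> ideal_pow I p" "c' = (\<Sum>j\<in>{1..<k}. y j * cc j)"
    using c' by (auto elim: lc_memE)
  let ?g = "single p b"
  let ?h = "gr_mul (gr_star (y k)) ?g"
  have grg: "gr_rep I ?g" using single_rep[OF b] .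
  have hrep: "gr_rep I ?h"
  proof -
    have "single (Suc p) (y k * b) = ?h" by (rule ext) (subst gr_mul_single, simp add: single_def)
    moreover have "gr_rep I (single (Suc p) (y k * b))" by (rule single_rep) (rule pow_mult[OF yk b])
    ultimately show ?thesis by simp
  qed
  have hid: "?h \<in> gr_ideal I y (k - 1)"
    unfolding gr_ideal_def
  proof (intro CollectI conjI hrep exI[of _ "\<lambda>j. single p (cc j)"] ballI)
    fix j assume "j \<in> {1..k - 1}"
    then show "gr_rep I (single p (cc j))" using cc(1) km by (auto intro: single_rep)
  next
    show "gr_eq I ?h (\<lambda>n. \<Sum>j\<in>{1..k - 1}. gr_mul (gr_star (y j)) (single p (cc j)) n)"
      unfolding gr_eq_def
    proof
      fix n
      show "?h n - (\<Sum>j\<in>{1..k - 1}. gr_mul (gr_star (y j)) (single p (cc j)) n) \<in> ideal_pow I (Suc n)"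
      proof (cases "n = Suc p")
        case True
        then have "?h n - (\<Sum>j\<in>{1..k - 1}. gr_mul (gr_star (y j)) (single p (cc j)) n) = e"
          using eq cc(2) km by (simp add: gr_mul_single)
        then show ?thesis using e True by simp
      next
        case False
        then show ?thesis using ideal_zero[OF pow_ideal, of I "Suc n"] by (simp add: gr_mul_single del: ideal_pow.simps)
      qed
    qed
  qed
  have "?g \<in> gr_ideal I y (k - 1)" using G k grg hid unfolding gr_regular_seq_def by blast
  then obtain G' where G': "\<forall>j\<in>{1..k - 1}. gr_rep I (G' j)"
    "gr_eq I ?g (\<lambda>n. \<Sum>j\<in>{1..k - 1}. gr_mul (gr_star (y j)) (G' j) n)"
    unfolding gr_ideal_def by blast
  have at_p: "b - (\<Sum>j\<in>{1..<k}. gr_mul (gr_star (y j)) (G' j) p) \<in> ideal_pow I (Suc p)"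
  proof -
    have "single p b p - (\<Sum>j\<in>{1..k - 1}. gr_mul (gr_star (y j)) (G' j) p) \<in> ideal_pow I (Suc p)"
      using G'(2) unfolding gr_eq_def by (rule spec)
    then show ?thesis using km by (simp add: single_def del: ideal_pow.simps)
  qed
  show ?thesis
  proof (cases "p = 0")
    case True
    have z: "0 \<in> lc y {1..<k} (ideal_pow I (p - 1))" by (rule ideal_zero[OF lc_ideal[OF pow_ideal]])
    have "b - 0 \<in> ideal_pow I (Suc p)" using at_p True by (simp add: gr_mul_star del: ideal_pow.simps)
    then show ?thesis using z by blast
  next
    case False
    have eqs: "(\<Sum>j\<in>{1..<k}. gr_mul (gr_star (y j)) (G' j) p) = (\<Sum>j\<in>{1..<k}. y j * G' j (p - 1))"
      using False by (simp add: gr_mul_star)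
    have "\<forall>j\<in>{1..<k}. G' j (p - 1) \<in> ideal_pow I (p - 1)"
      using G'(1) km unfolding gr_rep_def by auto
    then have d: "(\<Sum>j\<in>{1..<k}. y j * G' j (p - 1)) \<in> lc y {1..<k} (ideal_pow I (p - 1))"
      by (rule lc_memI)
    show ?thesis using d at_p unfolding eqs by blast
  qed
qed



lemma lc_SucD: "t \<in> lc x {1..Suc k} K \<Longrightarrow> \<exists>c b. c \<in> lc x {1..k} K \<and> b \<in> K \<and> t = c + x (Suc k) * b"
proof -
  assume "t \<in> lc x {1..Suc k} K"
  then obtain c where c: "\<forall>j\<in>{1..Suc k}. c j \<in> K" "t = (\<Sum>j\<in>{1..Suc k}. x j * c j)"
    by (auto elim: lc_memE)
  have "t = (\<Sum>j\<in>{1..k}. x j * c j) + x (Suc k) * c (Suc k)"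
    using c(2) by (simp add: add.commute)
  moreover have "(\<Sum>j\<in>{1..k}. x j * c j) \<in> lc x {1..k} K" using c(1) by (intro lc_memI) auto
  moreover have "c (Suc k) \<in> K" using c(1) by auto
  ultimately show ?thesis by blast
qed

lemma lc_SucI: "c \<in> lc x {1..k} K \<Longrightarrow> b \<in> K \<Longrightarrow> c + x (Suc k) * b \<in> lc x {1..Suc k} K"
proof -
  assume c: "c \<in> lc x {1..k} K" and b: "b \<in> K"
  then obtain cc where cc: "\<forall>j\<in>{1..k}. cc j \<in> K" "c = (\<Sum>j\<in>{1..k}. x j * cc j)"
    by (auto elim: lc_memE)
  let ?d = "cc(Suc k := b)"
  have "(\<Sum>j\<in>{1..Suc k}. x j * ?d j) = (\<Sum>j\<in>{1..k}. x j * ?d j) + x (Suc k) * b" by simp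
  also have "(\<Sum>j\<in>{1..k}. x j * ?d j) = c" unfolding cc(2) by (intro sum.cong) auto
  finally have "c + x (Suc k) * b = (\<Sum>j\<in>{1..Suc k}. x j * ?d j)" by simp
  moreover have "\<forall>j\<in>{1..Suc k}. ?d j \<in> K" using cc(1) b by auto
  ultimately show ?thesis using lc_memI by metis
qed

lemma VV:
  assumes G: "gr_regular_seq I x K" and xI: "\<forall>l\<in>{1..K}. x l \<in> I"
  shows "k \<le> K \<Longrightarrow> \<forall>m\<ge>1. \<forall>a. a \<in> lc x {1..k} UNIV \<and> a \<in> ideal_pow I m
            \<longrightarrow> a \<in> lc x {1..k} (ideal_pow I (m - 1))"
proof (induction k)
  case 0 then show ?case by (simp add: lc_empty)
next
  case (Suc k)
  let ?y = "x (Suc k)"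
  have IH: "\<And>m a. m \<ge> 1 \<Longrightarrow> a \<in> lc x {1..k} UNIV \<Longrightarrow> a \<in> ideal_pow I m
            \<Longrightarrow> a \<in> lc x {1..k} (ideal_pow I (m - 1))" using Suc by auto
  have y: "?y \<in> I" using Suc.prems xI by auto
  have kK: "Suc k \<in> {1..K}" using Suc.prems by auto
  show ?case
  proof (intro allI impI, elim conjE)
    fix m a assume m: "m \<ge> 1" and a1: "a \<in> lc x {1..Suc k} UNIV" and a2: "a \<in> ideal_pow I m"
    have step: "p \<le> m - 1 \<Longrightarrow> \<exists>c b. c \<in> lc x {1..k} UNIV \<and> b \<in> ideal_pow I p \<and> a = c + ?y * b" for p
    proof (induction p)
      case 0 then show ?case using lc_SucD[OF a1] by simp
    next
      case (Suc p)
      then obtain c b where cb: "c \<in> lc x {1..k} UNIV" "b \<in> ideal_pow I p" "a = c + ?y * b" by auto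
      have yb: "?y * b \<in> ideal_pow I (Suc p)" using pow_mult[OF y cb(2)] .
      have "ideal_pow I m \<subseteq> ideal_pow I (Suc p)" by (rule pow_anti) (use Suc.prems in simp)
      then have aS: "a \<in> ideal_pow I (Suc p)" using a2 by blast
      have "c = a - ?y * b" using cb(3) by simp
      then have "c \<in> ideal_pow I (Suc p)" using ideal_diff[OF pow_ideal aS yb] by metis
      then have cP: "c \<in> lc x {1..k} (ideal_pow I p)" using IH[of "Suc p" c] cb(1) by simp
      have ncP: "- c \<in> lc x {1..<Suc k} (ideal_pow I p)"
        using ideal_neg[OF lc_ideal[OF pow_ideal] cP] by (simp add: atLeastLessThanSuc_atLeastAtMost)
      have "ideal_pow I m \<subseteq> ideal_pow I (Suc (Suc p))" by (rule pow_anti) (use Suc.prems in simp)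
      then have aSS: "a \<in> ideal_pow I (Suc (Suc p))" using a2 by blast
      have eq: "?y * b = - c + a" using cb(3) by simp
      obtain d where d: "d \<in> lc x {1..<Suc k} (ideal_pow I (p - 1))" "b - d \<in> ideal_pow I (Suc p)"
        using GR[OF G kK y cb(2) ncP aSS eq] by blast
      have d': "d \<in> lc x {1..k} UNIV"
        using d(1) lc_mono[of "ideal_pow I (p - 1)" UNIV x] by (auto simp: atLeastLessThanSuc_atLeastAtMost)
      have "c + ?y * d \<in> lc x {1..k} UNIV"
        using cb(1) d' lc_ideal[of UNIV x "{1..k}"] by (auto intro!: ideal_add ideal_lmult simp: is_ideal_def)
      moreover have "a = (c + ?y * d) + ?y * (b - d)" using cb(3) by (simp add: algebra_simps)
      ultimately show ?case using d(2) by blast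
    qed
    obtain c b where cb: "c \<in> lc x {1..k} UNIV" "b \<in> ideal_pow I (m - 1)" "a = c + ?y * b"
      using step[of "m - 1"] by auto
    have yb: "?y * b \<in> ideal_pow I m" using pow_mult[OF y cb(2)] m by simp
    have "c = a - ?y * b" using cb(3) by simp
    then have "c \<in> ideal_pow I m" using ideal_diff[OF pow_ideal a2 yb] by metis
    then have "c \<in> lc x {1..k} (ideal_pow I (m - 1))" using IH[OF m cb(1)] by simp
    then show "a \<in> lc x {1..Suc k} (ideal_pow I (m - 1))" using lc_SucI cb by metis
  qed
qed


theorem lemma3p3:
  fixes I J :: "'a::comm_ring_1 set" and x :: "nat \<Rightarrow> 'a" and s :: nat
  assumes "noetherian_ring TYPE('a)" and "local_ring TYPE('a)"
    and "is_ideal I" and "is_ideal J" and "J \<subseteq> I"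
    and "minimal_gens x s J"
  shows "(\<forall>n\<ge>2. (\<forall>i\<in>{1..s}. koszul_H1_zero I x i n) \<longleftrightarrow>
             (\<forall>i\<in>{1..s}. colon_ideal (ideal_mult (ideal_gen (x ` {1..<i})) (ideal_pow I (n - 1))) (x i)
                            \<inter> ideal_pow I (n - 1)
                          \<subseteq> ideal_mult (ideal_gen (x ` {1..<i})) (ideal_pow I (n - 2))))
       \<and> (regular_seq x s \<and> gr_regular_seq I x (s - 1) \<longrightarrow>
            (\<forall>n\<ge>2. \<forall>i\<in>{1..s}. koszul_H1_zero I x i n))"
proof -
  have xI: "\<forall>l\<in>{1..s}. x l \<in> I"
    using assms(5,6) ideal_gen_sub[of "x ` {1..s}"] unfolding minimal_gens_def by auto
  have eqM: "\<And>i q. ideal_mult (ideal_gen (x ` {1..<i})) (ideal_pow I q) = lc x {1..<i} (ideal_pow I q)"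
    by (rule ideal_mult_lc) (auto simp: pow_ideal)
  have P1: "(\<forall>i\<in>{1..s}. koszul_H1_zero I x i n) \<longleftrightarrow>
             (\<forall>i\<in>{1..s}. colon_ideal (ideal_mult (ideal_gen (x ` {1..<i})) (ideal_pow I (n - 1))) (x i)
                            \<inter> ideal_pow I (n - 1)
                          \<subseteq> ideal_mult (ideal_gen (x ` {1..<i})) (ideal_pow I (n - 2)))"
    if n: "n \<ge> 2" for n
  proof
    assume H: "\<forall>i\<in>{1..s}. koszul_H1_zero I x i n"
    show "\<forall>i\<in>{1..s}. colon_ideal (ideal_mult (ideal_gen (x ` {1..<i})) (ideal_pow I (n - 1))) (x i)
                            \<inter> ideal_pow I (n - 1)
                          \<subseteq> ideal_mult (ideal_gen (x ` {1..<i})) (ideal_pow I (n - 2))"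
      unfolding eqM colon_ideal_def
    proof (intro ballI subsetI)
      fix i r assume i: "i \<in> {1..s}"
        and r: "r \<in> {r. r * x i \<in> lc x {1..<i} (ideal_pow I (n - 1))} \<inter> ideal_pow I (n - 1)"
      show "r \<in> lc x {1..<i} (ideal_pow I (n - 2))"
        using K1[of I x i n r] H i r by auto
    qed
  next
    assume C: "\<forall>i\<in>{1..s}. colon_ideal (ideal_mult (ideal_gen (x ` {1..<i})) (ideal_pow I (n - 1))) (x i)
                            \<inter> ideal_pow I (n - 1)
                          \<subseteq> ideal_mult (ideal_gen (x ` {1..<i})) (ideal_pow I (n - 2))"
    show "\<forall>i\<in>{1..s}. koszul_H1_zero I x i n"
    proof
      fix i assume i: "i \<in> {1..s}"
      show "koszul_H1_zero I x i n"
      proof (rule K2[OF _ n])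
        show "\<forall>l\<in>{1..i}. x l \<in> I" using xI i by auto
        show "\<forall>i'\<in>{1..i}. \<forall>r. r \<in> ideal_pow I (n - 1) \<and> r * x i' \<in> lc x {1..<i'} (ideal_pow I (n - 1))
         \<longrightarrow> r \<in> lc x {1..<i'} (ideal_pow I (n - 2))"
        proof (intro ballI allI impI)
          fix i' r assume i': "i' \<in> {1..i}"
            and r: "r \<in> ideal_pow I (n - 1) \<and> r * x i' \<in> lc x {1..<i'} (ideal_pow I (n - 1))"
          have "i' \<in> {1..s}" using i i' by auto
          then show "r \<in> lc x {1..<i'} (ideal_pow I (n - 2))"
            using C r unfolding eqM colon_ideal_def by blast
        qed
      qed
    qed
  qed
  have P2: "\<forall>n\<ge>2. \<forall>i\<in>{1..s}. koszul_H1_zero I x i n"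
    if R: "regular_seq x s" and G: "gr_regular_seq I x (s - 1)"
  proof (intro allI impI ballI)
    fix n :: nat and i assume n: "n \<ge> 2" and i: "i \<in> {1..s}"
    have xI': "\<forall>l\<in>{1..s - 1}. x l \<in> I" using xI by auto
    show "koszul_H1_zero I x i n"
    proof (rule K2[OF _ n])
      show "\<forall>l\<in>{1..i}. x l \<in> I" using xI i by auto
      show "\<forall>i'\<in>{1..i}. \<forall>r. r \<in> ideal_pow I (n - 1) \<and> r * x i' \<in> lc x {1..<i'} (ideal_pow I (n - 1))
         \<longrightarrow> r \<in> lc x {1..<i'} (ideal_pow I (n - 2))"
      proof (intro ballI allI impI)
        fix i' r assume i': "i' \<in> {1..i}"
          and r: "r \<in> ideal_pow I (n - 1) \<and> r * x i' \<in> lc x {1..<i'} (ideal_pow I (n - 1))"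
        have is': "i' \<in> {1..s}" using i i' by auto
        have "r * x i' \<in> lc x {1..<i'} UNIV" using r lc_mono[of "ideal_pow I (n - 1)" UNIV x] by blast
        then have "r * x i' \<in> ideal_gen (x ` {1..<i'})" using ideal_gen_lc[of "{1..<i'}" x] by simp
        then have "r \<in> ideal_gen (x ` {1..<i'})" using R is' unfolding regular_seq_def by blast
        then have r1: "r \<in> lc x {1..<i'} UNIV" using ideal_gen_lc[of "{1..<i'}" x] by simp
        have set: "{1..<i'} = {1..i' - 1}" using is' by auto
        have le: "i' - 1 \<le> s - 1" using is' by auto
        have r1': "r \<in> lc x {1..i' - 1} UNIV" using r1 unfolding set .
        have m1: "(1::nat) \<le> n - 1" using n by simp
        have "r \<in> lc x {1..i' - 1} (ideal_pow I (n - 1 - 1))"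
          using VV[OF G xI' le, rule_format, OF m1, of r] r1' r by blast
        moreover have "n - 1 - 1 = n - 2" by simp
        ultimately show "r \<in> lc x {1..<i'} (ideal_pow I (n - 2))" unfolding set by simp
      qed
    qed
  qed
  show ?thesis using P1 P2 by blast
qed

end
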